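(* Let $\tfrac12 H_{24}$ denote the halved $24$-cube (defined below). For each integer $c\in\{3,6,8,9,11,12\}\cup\{14,15,16,\dots,128\}$ there exists a set $C\subset V(\tfrac12 H_{24})$ whose characteristic function $\chi_C$ is a perfect coloring of $\tfrac12 H_{24}$ with parameters $((20+c,\,256-c)(c,\,276-c))$.
   Context: $E^n$ is the set of binary words of length $n$; the (Hamming) distance between two words is the number of positions where they differ, and the weight of a word is its number of ones. The halved $24$-cube $\tfrac12 H_{24}$ is the graph whose vertices are the even-weight words of $E^{24}$, two of them adjacent iff they are at Hamming distance exactly $2$ (it is regular of degree $276$; the analogous graph on odd-weight words is isomorphic to it). For a graph $G$ and a set $C$ with $\emptyset\neq C\subsetneq V(G)$, the characteristic function $\chi_C$ is a perfect coloring with parameters $((a,b)(c,d))$ if every vertex of $C$ has exactly $a$ neighbours in $C$ and exactly $b$ neighbours outside $C$, and every vertex outside $C$ has exactly $c$ neighbours in $C$ and exactly $d$ neighbours outside $C$. *)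

theory Defs
  imports Main
begin

definition weight :: "bool list \<Rightarrow> nat" where
  "weight w = length (filter id w)"

definition hamming :: "bool list \<Rightarrow> bool list \<Rightarrow> nat" where
  "hamming u v = length (filter (\<lambda>(a, b). a \<noteq> b) (zip u v))"

definition halved_cube_vertices :: "nat \<Rightarrow> bool list set" where
  "halved_cube_vertices n = {w. length w = n \<and> even (weight w)}"

definition halved_cube_adj :: "bool list \<Rightarrow> bool list \<Rightarrow> bool" where
  "halved_cube_adj u v \<longleftrightarrow> hamming u v = 2"

definition perfect_coloring_params ::
  "'v set \<Rightarrow> ('v \<Rightarrow> 'v \<Rightarrow> bool) \<Rightarrow> 'v set \<Rightarrow> nat \<Rightarrow> nat \<Rightarrow> nat \<Rightarrow> nat \<Rightarrow> bool" where
  "perfect_coloring_params V adj C a b c d \<longleftrightarrow>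
     C \<noteq> {} \<and> C \<subset> V \<and>
     (\<forall>x\<in>C. card {y\<in>V. adj x y \<and> y \<in> C} = a \<and> card {y\<in>V. adj x y \<and> y \<notin> C} = b) \<and>
     (\<forall>x\<in>V - C. card {y\<in>V. adj x y \<and> y \<in> C} = c \<and> card {y\<in>V. adj x y \<and> y \<notin> C} = d)"

end

theory Submission
  imports Defs
begin


definition supp :: "bool list \<Rightarrow> nat set" where
  "supp x = {i. i < length x \<and> x ! i}"

definition sd :: "'a set \<Rightarrow> 'a set \<Rightarrow> 'a set" where
  "sd A B = (A - B) \<union> (B - A)"

lemma weight_supp: "weight x = card (supp x)"
  unfolding weight_def supp_def by (simp add: length_filter_conv_card)

lemma hamming_card:
  assumes "length x = length y"
  shows "hamming x y = card {k. k < length x \<and> x ! k \<noteq> y ! k}"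
  using assms unfolding hamming_def
  by (simp add: length_filter_conv_card) (rule arg_cong[where f=card], auto simp: nth_zip)

definition fl :: "bool list \<Rightarrow> nat \<Rightarrow> nat \<Rightarrow> bool list" where
  "fl x i j = x[i := \<not> x ! i, j := \<not> x ! j]"

lemma fl_nth:
  assumes "i \<noteq> j" "i < length x" "j < length x"
  shows "fl x i j ! k = (if k = i \<or> k = j then \<not> x ! k else x ! k)"
  using assms unfolding fl_def by (auto simp: nth_list_update)

lemma fl_length[simp]: "length (fl x i j) = length x"
  unfolding fl_def by simp

lemma fl_diff:
  assumes "i < j" "j < length x"
  shows "{k. k < length x \<and> x ! k \<noteq> fl x i j ! k} = {i, j}"
  using assms by (auto simp: fl_nth)

lemma supp_fl:
  assumes "i < j" "j < length x"
  shows "supp (fl x i j) = sd (sd (supp x) {i}) {j}"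
  using assms unfolding supp_def sd_def by (auto simp: fl_nth)

lemma card_sd_parity:
  assumes "finite A" "finite B"
  shows "odd (card (sd A B)) = (odd (card A) \<noteq> odd (card B))"
proof -
  have 1: "card A = card (A - B) + card (A \<inter> B)"
  proof -
    have "A = (A - B) \<union> (A \<inter> B)" by auto
    then have "card A = card ((A - B) \<union> (A \<inter> B))" by simp
    also have "\<dots> = card (A - B) + card (A \<inter> B)" using assms by (intro card_Un_disjoint) auto
    finally show ?thesis .
  qed
  have 2: "card B = card (B - A) + card (A \<inter> B)"
  proof -
    have "B = (B - A) \<union> (A \<inter> B)" by auto
    then have "card B = card ((B - A) \<union> (A \<inter> B))" by simp
    also have "\<dots> = card (B - A) + card (A \<inter> B)" using assms by (intro card_Un_disjoint) auto
    finally show ?thesis .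
  qed
  have 3: "card (sd A B) = card (A - B) + card (B - A)"
    unfolding sd_def using assms by (subst card_Un_disjoint) auto
  show ?thesis using 1 2 3 by presburger
qed

definition V24 where "V24 = halved_cube_vertices 24"

lemma fl_in_V:
  assumes "x \<in> V24" "i < j" "j < 24"
  shows "fl x i j \<in> V24"
proof -
  have len: "length x = 24" and ev: "even (card (supp x))"
    using assms(1) by (auto simp: V24_def halved_cube_vertices_def weight_supp)
  have fin: "finite (supp x)" unfolding supp_def by auto
  have f1: "finite (sd (supp x) {i})" using fin by (simp add: sd_def)
  have "even (card (sd (sd (supp x) {i}) {j}))"
    using ev fin f1 card_sd_parity[of "sd (supp x) {i}" "{j}"] card_sd_parity[of "supp x" "{i}"] by simp
  then show ?thesis using assms len
    by (simp add: V24_def halved_cube_vertices_def weight_supp supp_fl)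
qed

lemma fl_adj:
  assumes "x \<in> V24" "i < j" "j < 24"
  shows "halved_cube_adj x (fl x i j)"
proof -
  have len: "length x = 24" using assms(1) by (auto simp: V24_def halved_cube_vertices_def)
  have "hamming x (fl x i j) = card {k. k < length x \<and> x ! k \<noteq> fl x i j ! k}"
    by (rule hamming_card) simp
  also have "\<dots> = card {i, j}" using assms len by (subst fl_diff) auto
  finally show ?thesis unfolding halved_cube_adj_def using assms by simp
qed

lemma adj_is_fl:
  assumes "x \<in> V24" "y \<in> V24" "halved_cube_adj x y"
  shows "\<exists>i j. i < j \<and> j < 24 \<and> y = fl x i j"
proof -
  have lx: "length x = 24" and ly: "length y = 24"
    using assms by (auto simp: V24_def halved_cube_vertices_def)
  let ?D = "{k. k < length x \<and> x ! k \<noteq> y ! k}"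
  have "card ?D = 2" using assms(3) lx ly by (simp add: halved_cube_adj_def hamming_card)
  then obtain a b where D: "?D = {a, b}" "a \<noteq> b" by (auto simp: card_2_iff)
  define i where "i = min a b"
  define j where "j = max a b"
  have ij: "i < j" using D(2) by (auto simp: i_def j_def)
  have D2: "?D = {i, j}" using D by (auto simp: i_def j_def min_def max_def)
  have "j \<in> ?D" using D2 by auto
  then have j24: "j < 24" using lx by simp
  have "y = fl x i j"
  proof (rule nth_equalityI)
    show "length y = length (fl x i j)" using lx ly by simp
    fix k assume "k < length y"
    then have k: "k < 24" using ly by simp
    show "y ! k = fl x i j ! k"
    proof (cases "k = i \<or> k = j")
      case True
      then have "k \<in> ?D" using D2 by auto
      then show ?thesis using True ij j24 lx by (auto simp: fl_nth)
    next
      case False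
      then have "k \<notin> ?D" using D2 by auto
      then show ?thesis using False ij j24 lx k by (auto simp: fl_nth)
    qed
  qed
  then show ?thesis using ij j24 by blast
qed

definition PR :: "(nat \<times> nat) set" where "PR = {(i, j). i < j \<and> j < 24}"

lemma fl_inj:
  assumes "x \<in> V24"
  shows "inj_on (\<lambda>(i, j). fl x i j) PR"
proof (rule inj_onI, clarsimp simp: PR_def)
  fix a b c d assume h: "a < b" "b < 24" "c < d" "d < 24" "fl x a b = fl x c d"
  have lx: "length x = 24" using assms by (auto simp: V24_def halved_cube_vertices_def)
  have "{a, b} = {k. k < length x \<and> x ! k \<noteq> fl x a b ! k}" using h lx by (subst fl_diff) auto
  also have "\<dots> = {k. k < length x \<and> x ! k \<noteq> fl x c d ! k}" using h by simp
  also have "\<dots> = {c, d}" using h lx by (subst fl_diff) auto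
  finally have "{a, b} = {c, d}" .
  then show "a = c \<and> b = d" using h by (auto simp: doubleton_eq_iff)
qed

lemma nbr_card:
  assumes "x \<in> V24"
  shows "card {y \<in> V24. halved_cube_adj x y \<and> P y} = card {(i, j) \<in> PR. P (fl x i j)}"
proof -
  have "{y \<in> V24. halved_cube_adj x y \<and> P y} = (\<lambda>(i, j). fl x i j) ` {(i, j) \<in> PR. P (fl x i j)}"
  proof
    show "{y \<in> V24. halved_cube_adj x y \<and> P y} \<subseteq> (\<lambda>(i, j). fl x i j) ` {(i, j) \<in> PR. P (fl x i j)}"
    proof
      fix y assume "y \<in> {y \<in> V24. halved_cube_adj x y \<and> P y}"
      then have y: "y \<in> V24" "halved_cube_adj x y" "P y" by auto
      obtain i j where "i < j" "j < 24" "y = fl x i j" using adj_is_fl[OF assms y(1,2)] by blast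
      then show "y \<in> (\<lambda>(i, j). fl x i j) ` {(i, j) \<in> PR. P (fl x i j)}"
        using y(3) by (auto simp: PR_def image_iff)
    qed
    show "(\<lambda>(i, j). fl x i j) ` {(i, j) \<in> PR. P (fl x i j)} \<subseteq> {y \<in> V24. halved_cube_adj x y \<and> P y}"
      using fl_in_V[OF assms] fl_adj[OF assms] by (auto simp: PR_def)
  qed
  moreover have "inj_on (\<lambda>(i, j). fl x i j) {(i, j) \<in> PR. P (fl x i j)}"
    using fl_inj[OF assms] by (rule inj_on_subset) auto
  ultimately show ?thesis by (simp add: card_image)
qed



definition hsb :: "bool list list" where "hsb = [[False,True,True,True,True,True,True,True,True,True,True,True], [True,True,True,False,True,True,True,False,False,False,True,False], [True,True,False,True,True,True,False,False,False,True,False,True], [True,False,True,True,True,False,False,False,True,False,True,True], [True,True,True,True,False,False,False,True,False,True,True,False], [True,True,True,False,False,False,True,False,True,True,False,True], [True,True,False,False,False,True,False,True,True,False,True,True], [True,False,False,False,True,False,True,True,False,True,True,True], [True,False,False,True,False,True,True,False,True,True,True,False], [True,False,True,False,True,True,False,True,True,True,False,False], [True,True,False,True,True,False,True,True,True,False,False,False], [True,False,True,True,False,True,True,True,False,False,False,True], [True,False,False,False,False,False,False,False,False,False,False,False], [False,True,False,False,False,False,False,False,False,False,False,False], [False,False,True,False,False,False,False,False,False,False,False,False], [False,False,False,True,False,False,False,False,False,False,False,False], [False,False,False,False,True,False,False,False,False,False,False,False], [False,False,False,False,False,True,False,False,False,False,False,False], [False,False,False,False,False,False,True,False,False,False,False,False],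 [False,False,False,False,False,False,False,True,False,False,False,False], [False,False,False,False,False,False,False,False,True,False,False,False], [False,False,False,False,False,False,False,False,False,True,False,False], [False,False,False,False,False,False,False,False,False,False,True,False], [False,False,False,False,False,False,False,False,False,False,False,True]]"

definition h :: "nat \<Rightarrow> nat set" where "h i = supp (hsb ! i)"

lemma hsb_facts: "length hsb = 24" "list_all (\<lambda>l. length l = 12 \<and> odd (weight l)) hsb"
  by (simp_all add: hsb_def weight_def)

lemma h_facts:
  assumes "i < 24"
  shows "h i \<subseteq> {..<12}" "finite (h i)" "odd (card (h i))"
proof -
  have "length (hsb ! i) = 12 \<and> odd (weight (hsb ! i))"
    using hsb_facts assms by (simp add: list_all_length)
  then show "h i \<subseteq> {..<12}" "finite (h i)" "odd (card (h i))"
    by (auto simp: h_def supp_def weight_supp)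
qed

interpretation SD: comm_monoid_set "sd :: nat set \<Rightarrow> nat set \<Rightarrow> nat set" "{}"
  by unfold_locales (auto simp: sd_def)

definition Psi :: "nat set \<Rightarrow> nat set" where "Psi R = SD.F h R"

lemma Psi_empty[simp]: "Psi {} = {}" by (simp add: Psi_def)

lemma Psi_insert: "finite R \<Longrightarrow> i \<notin> R \<Longrightarrow> Psi (insert i R) = sd (h i) (Psi R)"
  by (simp add: Psi_def)

lemma Psi_single[simp]: "Psi {i} = h i"
  by (simp add: Psi_def sd_def)

lemma sd_cancel: "sd (sd x z) (sd y z) = sd x y"
  by (auto simp: sd_def)

lemma Psi_sd:
  assumes "finite A" "finite B"
  shows "Psi (sd A B) = sd (Psi A) (Psi B)"
proof -
  have eA: "A = (A - B) \<union> (A \<inter> B)" and eB: "B = (B - A) \<union> (A \<inter> B)" by auto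
  have pA: "Psi A = sd (Psi (A - B)) (Psi (A \<inter> B))"
    unfolding Psi_def using assms by (subst eA, subst SD.union_disjoint) auto
  have pB: "Psi B = sd (Psi (B - A)) (Psi (A \<inter> B))"
    unfolding Psi_def using assms by (subst eB, subst SD.union_disjoint) auto
  have e: "sd A B = (A - B) \<union> (B - A)" by (simp add: sd_def)
  have "Psi (sd A B) = sd (Psi (A - B)) (Psi (B - A))"
    unfolding e unfolding Psi_def using assms by (subst SD.union_disjoint) auto
  then show ?thesis using pA pB by (simp only: sd_cancel)
qed

lemma Psi_range:
  assumes "finite R" "R \<subseteq> {..<24}"
  shows "Psi R \<subseteq> {..<12} \<and> finite (Psi R) \<and> (odd (card (Psi R)) = odd (card R))"
  using assms
proof (induction R rule: finite_induct)
  case empty then show ?case by simp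
next
  case (insert i R)
  then have i: "i < 24" by auto
  have IH: "Psi R \<subseteq> {..<12}" "finite (Psi R)" "odd (card (Psi R)) = odd (card R)" using insert by auto
  show ?case using insert(1,2) IH h_facts[OF i] card_sd_parity[of "h i" "Psi R"]
    by (auto simp: Psi_insert sd_def)
qed

definition psi :: "bool list \<Rightarrow> nat set" where "psi x = Psi (supp x)"

lemma finite_supp[simp]: "finite (supp x)" by (simp add: supp_def)

lemma psi_fl:
  assumes "i < j" "j < length x"
  shows "psi (fl x i j) = sd (sd (psi x) (h i)) (h j)"
proof -
  have "finite (sd (supp x) {i})" by (simp add: sd_def)
  then show ?thesis unfolding psi_def using assms
    by (simp add: supp_fl Psi_sd)
qed

lemma psi_V:
  assumes "x \<in> V24"
  shows "psi x \<subseteq> {..<12}" "even (card (psi x))"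
proof -
  have "length x = 24" "even (card (supp x))" using assms
    by (auto simp: V24_def halved_cube_vertices_def weight_supp)
  moreover have "supp x \<subseteq> {..<length x}" by (auto simp: supp_def)
  ultimately show "psi x \<subseteq> {..<12}" "even (card (psi x))"
    using Psi_range[of "supp x"] unfolding psi_def by auto
qed

definition Q :: "nat set set \<Rightarrow> nat set \<Rightarrow> nat" where
  "Q S s = card {(i, j) \<in> PR. sd (sd s (h i)) (h j) \<in> S}"

definition good :: "nat \<Rightarrow> nat set set \<Rightarrow> bool" where
  "good c S \<longleftrightarrow> (\<forall>s. s \<subseteq> {..<12} \<and> even (card s) \<longrightarrow> Q S s = c + (if s \<in> S then 20 else 0))"

definition pairlist :: "(nat \<times> nat) list" where
  "pairlist = concat (map (\<lambda>j. map (\<lambda>i. (i, j)) [0..<j]) [0..<24])"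

lemma distinct_pl: "distinct (concat (map (\<lambda>j. map (\<lambda>i. (i, j)) [0..<j]) [0..<n]))"
  by (induction n) (auto simp: distinct_map inj_on_def)

lemma set_pairlist: "set pairlist = PR"
  by (auto simp: pairlist_def PR_def)

lemma card_PR_filter: "card {p \<in> PR. P p} = length (filter P pairlist)"
proof -
  have "{p \<in> PR. P p} = set (filter P pairlist)" by (auto simp: set_pairlist)
  moreover have "distinct pairlist" using distinct_pl[of 24] by (simp add: pairlist_def)
  ultimately show ?thesis by (metis distinct_card distinct_filter)
qed

lemma card_PR: "card PR = 276"
proof -
  have "card PR = card {p \<in> PR. True}" by simp
  also have "\<dots> = 276" unfolding card_PR_filter by (simp add: pairlist_def length_concat o_def upt_conv_Cons)
  finally show ?thesis .
qed

lemma finite_PR: "finite PR" unfolding PR_def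
  by (rule finite_subset[of _ "{..<24} \<times> {..<24}"]) auto

lemma count_in:
  assumes "x \<in> V24"
  shows "card {y \<in> V24. halved_cube_adj x y \<and> y \<in> {y \<in> V24. psi y \<in> S}} = Q S (psi x)"
proof -
  have lx: "length x = 24" using assms by (simp add: V24_def halved_cube_vertices_def)
  have "card {y \<in> V24. halved_cube_adj x y \<and> y \<in> {y \<in> V24. psi y \<in> S}}
      = card {(i, j) \<in> PR. fl x i j \<in> {y \<in> V24. psi y \<in> S}}"
    by (rule nbr_card[OF assms])
  also have "\<dots> = Q S (psi x)" unfolding Q_def
    by (rule arg_cong[where f=card]) (auto simp: PR_def fl_in_V[OF assms] psi_fl lx)
  finally show ?thesis .
qed

lemma count_out:
  assumes "x \<in> V24"
  shows "card {y \<in> V24. halved_cube_adj x y \<and> y \<notin> {y \<in> V24. psi y \<in> S}} = 276 - Q S (psi x)"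
proof -
  let ?C = "{y \<in> V24. psi y \<in> S}"
  have "card {y \<in> V24. halved_cube_adj x y \<and> y \<notin> ?C} = card {(i, j) \<in> PR. fl x i j \<notin> ?C}"
    by (rule nbr_card[OF assms])
  also have "{(i, j) \<in> PR. fl x i j \<notin> ?C} = PR - {(i, j) \<in> PR. fl x i j \<in> ?C}" by auto
  also have "card \<dots> = card PR - card {(i, j) \<in> PR. fl x i j \<in> ?C}"
    by (rule card_Diff_subset) (auto intro: finite_subset[OF _ finite_PR])
  also have "card {(i, j) \<in> PR. fl x i j \<in> ?C} = Q S (psi x)"
    using count_in[OF assms, of S] nbr_card[OF assms, of "\<lambda>y. y \<in> ?C"] by simp
  finally show ?thesis by (simp add: card_PR)
qed

lemma good_perfect:
  assumes "good c S" "0 < c" "c < 256"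
  shows "perfect_coloring_params (halved_cube_vertices 24) halved_cube_adj {y \<in> V24. psi y \<in> S}
           (20 + c) (256 - c) c (276 - c)"
proof -
  let ?C = "{y \<in> V24. psi y \<in> S}"
  have cnt: "card {y \<in> V24. halved_cube_adj x y \<and> y \<in> ?C} = c + (if x \<in> ?C then 20 else 0)"
    if "x \<in> V24" for x
    using count_in[OF that, of S] assms(1) psi_V[OF that] that unfolding good_def by auto
  have cnt2: "card {y \<in> V24. halved_cube_adj x y \<and> y \<notin> ?C} = 276 - (c + (if x \<in> ?C then 20 else 0))"
    if "x \<in> V24" for x
    using count_out[OF that, of S] assms(1) psi_V[OF that] that unfolding good_def by auto
  define x0 where "x0 = replicate 24 False"
  have x0: "x0 \<in> V24" by (simp add: x0_def V24_def halved_cube_vertices_def weight_def)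
  have ne: "?C \<noteq> {}"
  proof
    assume e: "?C = {}"
    have "{y \<in> V24. halved_cube_adj x0 y \<and> y \<in> ?C} = {}" unfolding e by blast
    then have "card {y \<in> V24. halved_cube_adj x0 y \<and> y \<in> ?C} = 0" by (simp only: card.empty)
    then show False using cnt[OF x0] assms(2) by simp
  qed
  have nV: "?C \<noteq> V24"
  proof
    assume e: "?C = V24"
    have "{y \<in> V24. halved_cube_adj x0 y \<and> y \<notin> ?C} = {}" unfolding e by blast
    then have "card {y \<in> V24. halved_cube_adj x0 y \<and> y \<notin> ?C} = 0" by (simp only: card.empty)
    then show False using cnt2[OF x0] x0 e assms(3) by simp
  qed
  show ?thesis unfolding perfect_coloring_params_def
    using ne nV cnt cnt2 by (auto simp: V24_def[symmetric])
qed



lemma good_empty: "good 0 {}"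
  by (simp add: good_def Q_def)

lemma good_union:
  assumes "good c1 S1" "good c2 S2" "S1 \<inter> S2 = {}"
  shows "good (c1 + c2) (S1 \<union> S2)"
  unfolding good_def
proof (intro allI impI)
  fix s :: "nat set" assume s: "s \<subseteq> {..<12} \<and> even (card s)"
  define A1 where "A1 = {(i, j) \<in> PR. sd (sd s (h i)) (h j) \<in> S1}"
  define A2 where "A2 = {(i, j) \<in> PR. sd (sd s (h i)) (h j) \<in> S2}"
  have f1: "finite A1" unfolding A1_def by (rule finite_subset[OF _ finite_PR]) auto
  have f2: "finite A2" unfolding A2_def by (rule finite_subset[OF _ finite_PR]) auto
  have dj: "A1 \<inter> A2 = {}" using assms(3) by (auto simp: A1_def A2_def)
  have "{(i, j) \<in> PR. sd (sd s (h i)) (h j) \<in> S1 \<union> S2} = A1 \<union> A2"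
    by (auto simp: A1_def A2_def)
  then have "Q (S1 \<union> S2) s = Q S1 s + Q S2 s" unfolding Q_def
    using card_Un_disjoint[OF f1 f2 dj] by (simp add: A1_def A2_def)
  then show "Q (S1 \<union> S2) s = c1 + c2 + (if s \<in> S1 \<union> S2 then 20 else 0)"
    using assms s unfolding good_def by auto
qed

definition Cs :: "nat list list" where "Cs = [[5, 6, 8, 11], [2, 4, 8, 9], [2, 4, 8, 11], [4, 5, 8, 9], [0, 1, 7, 10]]"
definition labl :: "bool list list" where "labl = [[False,False,False,False,True], [False,False,False,False,True], [False,False,False,True,False], [False,True,False,False,False], [False,False,True,True,False], [True,True,True,False,False], [True,True,False,False,False], [False,False,False,False,True], [True,False,True,True,False], [False,False,True,False,False], [False,False,False,False,True], [True,True,False,True,False], [False,False,False,False,True], [False,False,False,False,True], [False,True,True,False,False], [False,False,False,False,False], [False,True,True,True,False], [True,False,False,True,False], [True,False,False,False,False], [False,False,False,False,True], [True,True,True,True,False], [False,True,False,True,False], [False,False,False,False,True], [True,False,True,False,False]]"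
definition PLlit :: "bool list list" where "PLlit = [[False,False,False,False,False], [False,False,False,True,True], [False,False,False,True,True], [False,True,False,False,True], [False,True,False,False,True], [False,True,False,True,False], [False,False,True,True,True], [False,False,True,True,True], [False,False,True,False,False], [False,True,True,True,False], [True,True,True,False,True], [True,True,True,False,True], [True,True,True,True,False], [True,False,True,False,False], [True,True,False,True,False], [True,True,False,False,True], [True,True,False,False,True], [True,True,False,True,False], [True,False,False,False,False], [True,True,True,True,False], [False,False,True,False,False], [False,False,False,False,False], [False,False,False,False,False], [False,False,False,True,True], [False,True,False,False,True], [False,False,True,True,True], [True,True,True,False,True], [True,True,False,False,True], [True,False,True,True,True], [True,False,True,True,True], [True,False,True,False,False], [True,True,True,True,False], [True,False,False,False,False], [False,True,False,True,False], [False,True,True,True,False], [True,False,True,True,True], [False,False,True,False,True], [False,False,True,False,True], [False,False,True,True,False], [False,True,True,False,False], [False,False,False,True,False], [True,True,False,False,False], [True,True,True,False,False], [False,False,True,False,True], [True,False,False,True,False], [False,False,False,False,False], [False,False,False,False,False], [False,False,False,True,True], [False,True,False,False,True], [False,False,True,True,True], [True,True,True,False,True], [True,True,False,False,True], [False,False,False,False,False], [True,False,True,True,True], [False,False,True,False,True], [True,True,False,True,True], [True,True,False,True,True], [True,True,False,False,False], [True,False,False,True,False], [True,True,True,False,False], [False,False,True,True,False], [False,False,False,True,False], [True,True,False,True,True], [False,True,True,False,False], [True,True,True,True,False], [True,True,False,True,True], [False,False,False,False,False], [False,False,False,False,False], [False,False,False,True,True], [False,True,False,False,True], [False,False,True,True,True],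 [True,True,True,False,True], [True,True,False,False,True], [False,False,False,False,False], [True,False,True,True,True], [False,False,True,False,True], [False,False,False,False,False], [True,True,False,True,True], [False,False,False,False,False], [False,False,False,False,False], [False,False,False,True,True], [False,True,False,False,True], [False,False,True,True,True], [True,True,True,False,True], [True,True,False,False,True], [False,False,False,False,False], [True,False,True,True,True], [False,False,True,False,True], [False,False,False,False,False], [True,True,False,True,True], [False,False,False,False,False], [False,True,True,False,True], [False,True,True,False,True], [False,True,True,True,False], [False,False,True,False,False], [False,True,False,True,False], [True,False,False,False,False], [True,False,True,False,False], [False,True,True,False,True], [True,True,False,True,False], [False,True,False,False,False], [False,True,True,False,True], [True,False,True,True,False], [False,True,True,False,True], [False,True,True,False,True], [False,False,False,False,True], [False,False,False,False,True], [False,False,False,True,False], [False,True,False,False,False], [False,False,True,True,False], [True,True,True,False,False], [True,True,False,False,False], [False,False,False,False,True], [True,False,True,True,False], [False,False,True,False,False], [False,False,False,False,True], [True,True,False,True,False], [False,False,False,False,True], [False,False,False,False,True], [False,True,True,False,False], [False,True,True,True,True], [False,True,True,True,True], [False,True,True,False,False], [False,False,True,True,False], [False,True,False,False,False], [True,False,False,True,False], [True,False,True,True,False], [False,True,True,True,True], [True,True,False,False,False], [False,True,False,True,False], [False,True,True,True,True], [True,False,True,False,False], [False,True,True,True,True], [False,True,True,True,True], [False,False,False,True,False], [False,True,True,True,False], [True,False,False,True,True], [True,False,False,True,True], [True,False,False,False,False], [True,True,False,True,False], [True,False,True,False,False], [False,True,True,True,False], [False,True,False,True,False], [True,False,False,True,True],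 [False,False,True,False,False], [True,False,True,True,False], [True,False,False,True,True], [False,True,False,False,False], [True,False,False,True,True], [True,False,False,True,True], [True,True,True,True,False], [True,False,False,True,False], [True,True,True,False,False], [True,False,False,False,True], [True,False,False,False,True], [True,False,False,True,False], [True,True,False,False,False], [True,False,True,True,False], [False,True,True,False,False], [False,True,False,False,False], [True,False,False,False,True], [False,False,True,True,False], [True,False,True,False,False], [True,False,False,False,True], [False,True,False,True,False], [True,False,False,False,True], [True,False,False,False,True], [True,True,True,False,False], [True,False,False,False,False], [True,True,True,True,False], [False,False,False,True,False], [False,False,False,False,False], [False,False,False,False,False], [False,False,False,True,True], [False,True,False,False,True], [False,False,True,True,True], [True,True,True,False,True], [True,True,False,False,True], [False,False,False,False,False], [True,False,True,True,True], [False,False,True,False,True], [False,False,False,False,False], [True,True,False,True,True], [False,False,False,False,False], [False,False,False,False,False], [False,True,True,False,True], [False,False,False,False,True], [False,True,True,True,True], [True,False,False,True,True], [True,False,False,False,True], [True,True,True,True,True], [True,True,True,True,True], [True,True,True,False,False], [True,False,True,True,False], [True,True,False,False,False], [False,False,False,True,False], [False,False,True,True,False], [True,True,True,True,True], [False,True,False,False,False], [True,True,False,True,False], [True,True,True,True,True], [False,False,True,False,False], [True,True,True,True,True], [True,True,True,True,True], [True,False,False,True,False], [True,True,True,True,False], [True,False,False,False,False], [False,True,True,False,False], [False,True,True,True,False], [True,True,True,True,True], [False,True,False,True,True], [False,True,False,True,True], [False,True,False,False,False], [False,False,False,True,False], [False,True,True,False,False], [True,False,True,True,False], [True,False,False,True,False],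 [False,True,False,True,True], [True,True,True,False,False], [False,True,True,True,False], [False,True,False,True,True], [True,False,False,False,False], [False,True,False,True,True], [False,True,False,True,True], [False,False,True,True,False], [False,True,False,True,False], [False,False,True,False,False], [True,True,False,False,False], [True,True,False,True,False], [False,True,False,True,True], [True,False,True,False,False], [False,False,False,False,False], [False,False,False,False,False], [False,False,False,True,True], [False,True,False,False,True], [False,False,True,True,True], [True,True,True,False,True], [True,True,False,False,True], [False,False,False,False,False], [True,False,True,True,True], [False,False,True,False,True], [False,False,False,False,False], [True,True,False,True,True], [False,False,False,False,False], [False,False,False,False,False], [False,True,True,False,True], [False,False,False,False,True], [False,True,True,True,True], [True,False,False,True,True], [True,False,False,False,True], [False,False,False,False,False], [True,True,True,True,True], [False,True,False,True,True], [True,False,True,False,True], [True,False,True,False,True], [True,False,True,True,False], [True,True,True,False,False], [True,False,False,True,False], [False,True,False,False,False], [False,True,True,False,False], [True,False,True,False,True], [False,False,False,True,False], [True,False,False,False,False], [True,False,True,False,True], [False,True,True,True,False], [True,False,True,False,True], [True,False,True,False,True], [True,True,False,False,False], [True,False,True,False,False], [True,True,False,True,False], [False,False,True,True,False], [False,False,True,False,False], [True,False,True,False,True], [False,True,False,True,False], [True,True,True,True,False], [True,False,True,False,True]]"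

definition bx :: "bool list \<Rightarrow> bool list \<Rightarrow> bool list" where "bx u v = map2 (\<noteq>) u v"

definition dix :: "nat set \<Rightarrow> bool list" where
  "dix t = map (\<lambda>C. odd (card (t \<inter> set C))) Cs"

lemma dix_sd:
  assumes "finite a" "finite b"
  shows "dix (sd a b) = bx (dix a) (dix b)"
proof -
  have e: "sd a b \<inter> C = sd (a \<inter> C) (b \<inter> C)" for C by (auto simp: sd_def)
  have p: "odd (card (sd a b \<inter> C)) = (odd (card (a \<inter> C)) \<noteq> odd (card (b \<inter> C)))" for C
    unfolding e using assms by (intro card_sd_parity) auto
  show ?thesis unfolding dix_def bx_def by (simp add: p Cs_def)
qed

lemma card_supp_inter: "distinct C \<Longrightarrow> card (supp l \<inter> set C) = length (filter (\<lambda>k. k < length l \<and> l ! k) C)"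
proof -
  assume "distinct C"
  moreover have "supp l \<inter> set C = set (filter (\<lambda>k. k < length l \<and> l ! k) C)" by (auto simp: supp_def)
  ultimately show ?thesis by (metis distinct_card distinct_filter)
qed

lemma labs_comp: "list_all2 (\<lambda>l u. map (\<lambda>C. odd (length (filter (\<lambda>k. k < length l \<and> l ! k) C))) Cs = u) hsb labl"
  by (simp add: hsb_def labl_def Cs_def)

lemma dix_h: "i < 24 \<Longrightarrow> dix (h i) = labl ! i"
proof -
  assume i: "i < 24"
  have dC: "\<forall>C\<in>set Cs. distinct C" by (simp add: Cs_def)
  have "dix (h i) = map (\<lambda>C. odd (length (filter (\<lambda>k. k < length (hsb ! i) \<and> hsb ! i ! k) C))) Cs"
    unfolding dix_def h_def using dC by (auto simp: card_supp_inter)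
  also have "\<dots> = labl ! i" using labs_comp i hsb_facts(1) by (auto simp: list_all2_conv_all_nth)
  finally show ?thesis .
qed

lemma PL_comp: "map (\<lambda>(i, j). bx (labl ! i) (labl ! j)) pairlist = PLlit"
  by (simp add: pairlist_def labl_def PLlit_def bx_def upt_conv_Cons)

datatype tr = Lf nat | Nd tr tr

fun upd :: "bool list \<Rightarrow> tr \<Rightarrow> tr" where
  "upd [] (Lf n) = Lf (Suc n)"
| "upd (b # bs) (Nd l r) = (if b then Nd l (upd bs r) else Nd (upd bs l) r)"
| "upd _ t = t"

fun lk :: "bool list \<Rightarrow> tr \<Rightarrow> nat" where
  "lk [] (Lf n) = n"
| "lk (b # bs) (Nd l r) = (if b then lk bs r else lk bs l)"
| "lk _ _ = 0"

fun shp :: "nat \<Rightarrow> tr \<Rightarrow> bool" where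
  "shp 0 (Lf n) = True"
| "shp (Suc n) (Nd l r) = (shp n l \<and> shp n r)"
| "shp _ _ = False"

fun zt :: "nat \<Rightarrow> tr" where
  "zt 0 = Lf 0" | "zt (Suc n) = Nd (zt n) (zt n)"

lemma zt_shp: "shp n (zt n)"
  by (induction n) auto

lemma zt_lk: "lk u (zt n) = 0"
proof (induction n arbitrary: u)
  case 0 then show ?case by (cases u) auto
next
  case (Suc n) then show ?case by (cases u) auto
qed

lemmas zt_props = zt_shp zt_lk

lemma upd_props:
  "shp n t \<Longrightarrow> length v = n \<Longrightarrow> shp n (upd v t) \<and> (\<forall>u. length u = n \<longrightarrow> lk u (upd v t) = lk u t + (if u = v then 1 else 0))"
proof (induction n arbitrary: t v)
  case 0 then show ?case by (cases t) auto
next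
  case (Suc n)
  obtain l r where t: "t = Nd l r" using Suc.prems by (cases t) auto
  obtain b v' where v: "v = b # v'" using Suc.prems by (cases v) auto
  have sl: "shp n l" "shp n r" using Suc.prems t by auto
  have lv: "length v' = n" using Suc.prems v by auto
  show ?case
  proof (intro conjI allI impI)
    show "shp (Suc n) (upd v t)" using Suc.IH[OF sl(1) lv] Suc.IH[OF sl(2) lv] sl t v by auto
    fix u :: "bool list" assume "length u = Suc n"
    then obtain c u' where u: "u = c # u'" "length u' = n" by (cases u) auto
    show "lk u (upd v t) = lk u t + (if u = v then 1 else 0)"
      using Suc.IH[OF sl(1) lv] Suc.IH[OF sl(2) lv] sl t v u by auto
  qed
qed

lemma fold_upd:
  assumes "shp n t" "\<forall>v\<in>set vs. length v = n" "length u = n"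
  shows "shp n (foldr upd vs t) \<and> lk u (foldr upd vs t) = lk u t + length (filter (\<lambda>v. v = u) vs)"
  using assms
proof (induction vs)
  case Nil then show ?case by simp
next
  case (Cons v vs)
  then show ?case using upd_props[of n "foldr upd vs t" v] by auto
qed

lemma hist_comp: "foldr upd PLlit (zt 5) = (Nd (Nd (Nd (Nd (Nd (Lf 28) (Lf 8)) (Nd (Lf 8) (Lf 8))) (Nd (Nd (Lf 8) (Lf 8)) (Nd (Lf 8) (Lf 8)))) (Nd (Nd (Nd (Lf 8) (Lf 8)) (Nd (Lf 8) (Lf 8))) (Nd (Nd (Lf 8) (Lf 8)) (Nd (Lf 8) (Lf 8))))) (Nd (Nd (Nd (Nd (Lf 8) (Lf 8)) (Nd (Lf 8) (Lf 8))) (Nd (Nd (Lf 8) (Lf 8)) (Nd (Lf 8) (Lf 8)))) (Nd (Nd (Nd (Lf 8) (Lf 8)) (Nd (Lf 8) (Lf 8))) (Nd (Nd (Lf 8) (Lf 8)) (Nd (Lf 8) (Lf 8))))))"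
  by (simp add: PLlit_def numeral_eq_Suc)

lemma PL_len: "\<forall>v\<in>set PLlit. length v = 5"
  by (simp add: PLlit_def)

lemma T1_lk:
  assumes "length u = 5"
  shows "lk u (Nd (Nd (Nd (Nd (Nd (Lf 28) (Lf 8)) (Nd (Lf 8) (Lf 8))) (Nd (Nd (Lf 8) (Lf 8)) (Nd (Lf 8) (Lf 8)))) (Nd (Nd (Nd (Lf 8) (Lf 8)) (Nd (Lf 8) (Lf 8))) (Nd (Nd (Lf 8) (Lf 8)) (Nd (Lf 8) (Lf 8))))) (Nd (Nd (Nd (Nd (Lf 8) (Lf 8)) (Nd (Lf 8) (Lf 8))) (Nd (Nd (Lf 8) (Lf 8)) (Nd (Lf 8) (Lf 8)))) (Nd (Nd (Nd (Lf 8) (Lf 8)) (Nd (Lf 8) (Lf 8))) (Nd (Nd (Lf 8) (Lf 8)) (Nd (Lf 8) (Lf 8)))))) = (if u = [False, False, False, False, False] then 28 else 8)"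
proof -
  obtain a b c d e where "u = [a, b, c, d, e]" using assms
    by (cases u; cases "tl u"; cases "tl (tl u)"; cases "tl (tl (tl u))"; cases "tl (tl (tl (tl u)))") auto
  then show ?thesis by (cases a; cases b; cases c; cases d; cases e) simp_all
qed

lemma count_PL:
  assumes "length u = 5"
  shows "length (filter (\<lambda>v. v = u) PLlit) = (if u = [False, False, False, False, False] then 28 else 8)"
  using fold_upd[OF zt_props(1)[of 5] PL_len assms] zt_props(2)[of u 5] T1_lk[OF assms]
  by (simp add: hist_comp)



lemma length_bx[simp]: "length (bx u v) = min (length u) (length v)"
  by (simp add: bx_def)

lemma supp_bx: "length u = length v \<Longrightarrow> supp (bx u v) = sd (supp u) (supp v)"
  by (auto simp: supp_def bx_def sd_def)

lemma bx_eq_iff: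
  assumes "length d = n" "length x = n" "length y = n" "length a = n"
  shows "(bx (bx d x) y = a) \<longleftrightarrow> (bx x y = bx d a)"
  using assms by (auto simp: bx_def list_eq_iff_nth_eq)

definition SDs :: "bool list \<Rightarrow> nat set set" where "SDs a = {t. dix t = a}"

lemma len_dix[simp]: "length (dix t) = 5" by (simp add: dix_def Cs_def)

lemma len_labl: "i < 24 \<Longrightarrow> length (labl ! i) = 5"
  using dix_h[of i] by (metis len_dix)

lemma good_D:
  assumes a: "length a = 5"
  shows "good 8 (SDs a)"
  unfolding good_def
proof (intro allI impI)
  fix s :: "nat set" assume s: "s \<subseteq> {..<12} \<and> even (card s)"
  have fs: "finite s" using s finite_subset by blast
  let ?u = "bx (dix s) a"
  have lu: "length ?u = 5" using a by simp
  have "{(i, j) \<in> PR. sd (sd s (h i)) (h j) \<in> SDs a} = {(i, j) \<in> PR. bx (labl ! i) (labl ! j) = ?u}"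
  proof -
    have "sd (sd s (h i)) (h j) \<in> SDs a \<longleftrightarrow> bx (labl ! i) (labl ! j) = ?u" if "(i, j) \<in> PR" for i j
    proof -
      have ij: "i < 24" "j < 24" using that by (auto simp: PR_def)
      have "dix (sd (sd s (h i)) (h j)) = bx (bx (dix s) (labl ! i)) (labl ! j)"
      proof -
        have f1: "finite (sd s (h i))" using fs h_facts[OF ij(1)] by (simp add: sd_def)
        show ?thesis using dix_sd[OF f1 h_facts(2)[OF ij(2)]] dix_sd[OF fs h_facts(2)[OF ij(1)]]
          dix_h[OF ij(1)] dix_h[OF ij(2)] by simp
      qed
      then show ?thesis unfolding SDs_def
        using bx_eq_iff[of "dix s" 5 "labl ! i" "labl ! j" a] len_labl ij a by simp
    qed
    then show ?thesis by auto
  qed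
  also have "card \<dots> = length (filter (\<lambda>v. v = ?u) (map (\<lambda>(i, j). bx (labl ! i) (labl ! j)) pairlist))"
  proof -
    have "{(i, j) \<in> PR. bx (labl ! i) (labl ! j) = ?u} = {p \<in> PR. (\<lambda>(i, j). bx (labl ! i) (labl ! j) = ?u) p}"
      by auto
    then show ?thesis using card_PR_filter[of "\<lambda>(i, j). bx (labl ! i) (labl ! j) = ?u"]
      by (simp add: filter_map o_def split_def)
  qed
  also have "\<dots> = (if ?u = [False, False, False, False, False] then 28 else 8)"
    by (simp add: PL_comp count_PL[OF lu])
  also have "\<dots> = 8 + (if s \<in> SDs a then 20 else 0)"
  proof -
    have "?u = [False, False, False, False, False] \<longleftrightarrow> dix s = a"
      using a by (auto simp: bx_def list_eq_iff_nth_eq numeral_eq_Suc less_Suc_eq)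
    then show ?thesis by (simp add: SDs_def)
  qed
  finally show "Q (SDs a) s = 8 + (if s \<in> SDs a then 20 else 0)" unfolding Q_def .
qed



fun lp :: "('a \<Rightarrow> 'a \<Rightarrow> bool) \<Rightarrow> 'a list \<Rightarrow> bool" where
  "lp P [] = True" | "lp P (x # xs) = (list_all (P x) xs \<and> lp P xs)"

fun lt :: "('a \<Rightarrow> 'a \<Rightarrow> 'a \<Rightarrow> bool) \<Rightarrow> 'a list \<Rightarrow> bool" where
  "lt P [] = True" | "lt P (x # xs) = (lp (P x) xs \<and> lt P xs)"

lemma lp_nth: "lp P xs \<Longrightarrow> i < j \<Longrightarrow> j < length xs \<Longrightarrow> P (xs ! i) (xs ! j)"
proof (induction xs arbitrary: i j)
  case Nil then show ?case by simp
next
  case (Cons x xs)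
  obtain j' where j: "j = Suc j'" using Cons.prems by (cases j) auto
  show ?case
  proof (cases i)
    case 0 then show ?thesis using Cons.prems j by (simp add: list_all_length)
  next
    case (Suc i') then show ?thesis using Cons j by simp
  qed
qed

lemma lt_nth: "lt P xs \<Longrightarrow> i < j \<Longrightarrow> j < k \<Longrightarrow> k < length xs \<Longrightarrow> P (xs ! i) (xs ! j) (xs ! k)"
proof (induction xs arbitrary: i j k)
  case Nil then show ?case by simp
next
  case (Cons x xs)
  obtain j' where j: "j = Suc j'" using Cons.prems by (cases j) auto
  obtain k' where k: "k = Suc k'" using Cons.prems by (cases k) auto
  show ?case
  proof (cases i)
    case 0 then show ?thesis using Cons.prems j k lp_nth[of "P x" xs j' k'] by simp
  next
    case (Suc i') then show ?thesis using Cons j k by simp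
  qed
qed

definition z12 :: "bool list" where "z12 = [False,False,False,False,False,False,False,False,False,False,False,False]"

fun xl :: "bool list \<Rightarrow> bool list list \<Rightarrow> bool list" where
  "xl (b # bs) (w # ws) = (if b then bx w (xl bs ws) else xl bs ws)"
| "xl _ _ = z12"

definition U12 :: "bool list list" where "U12 = map (\<lambda>j. map (\<lambda>k. k = j) [0..<12]) [0..<12]"

lemma comp_units: "drop 12 hsb = U12"
  by (simp add: hsb_def U12_def upt_conv_Cons)

lemma comp_xl: "map (\<lambda>l. xl l hsb) (take 12 hsb) = U12"
  by (simp add: hsb_def U12_def upt_conv_Cons bx_def z12_def)

lemma comp_k1: "list_all (\<lambda>l. 6 \<le> weight l) (take 12 hsb)"
  by (simp add: hsb_def weight_def)

lemma comp_k2: "lp (\<lambda>u v. 5 \<le> weight (bx u v)) (take 12 hsb)"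
  by (simp add: hsb_def weight_def bx_def)

lemma comp_k3: "lt (\<lambda>u v w. 4 \<le> weight (bx u (bx v w))) (take 12 hsb)"
  by (simp add: hsb_def weight_def bx_def)



lemma supp_unit: "j < n \<Longrightarrow> supp (map (\<lambda>k. k = j) [0..<n]) = {j}"
  by (auto simp: supp_def)

lemma h_high: "j < 12 \<Longrightarrow> h (12 + j) = {j}"
proof -
  assume j: "j < 12"
  have "hsb ! (12 + j) = drop 12 hsb ! j" using hsb_facts(1) j by simp
  also have "\<dots> = map (\<lambda>k. k = j) [0..<12]" using j by (simp add: comp_units U12_def)
  finally show ?thesis using j by (simp add: h_def supp_unit)
qed

definition PsiW :: "bool list list \<Rightarrow> nat set \<Rightarrow> nat set" where
  "PsiW ws R = SD.F (\<lambda>i. supp (ws ! i)) R"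

lemma supp_Cons_mem: "i \<in> supp (b # bs) \<longleftrightarrow> (i = 0 \<and> b) \<or> (\<exists>k. i = Suc k \<and> k \<in> supp bs)"
  by (cases i) (auto simp: supp_def)

lemma supp_Cons: "supp (b # bs) = (if b then insert 0 (Suc ` supp bs) else Suc ` supp bs)"
  by (auto simp: supp_Cons_mem)

lemma PsiW_Suc: "PsiW (w # ws) (Suc ` S) = PsiW ws S"
  unfolding PsiW_def by (subst SD.reindex) (auto simp: o_def)

lemma supp_z12[simp]: "supp z12 = {}"
  by (auto simp: supp_def z12_def nth_Cons' split: if_splits)

lemma len_z12[simp]: "length z12 = 12" by (simp add: z12_def)

lemma PsiW_xl:
  "(\<forall>w\<in>set ws. length w = 12) \<Longrightarrow> length l \<le> length ws \<Longrightarrow> PsiW ws (supp l) = supp (xl l ws) \<and> length (xl l ws) = 12"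
proof (induction l arbitrary: ws)
  case Nil
  have "supp [] = {}" by (simp add: supp_def)
  then show ?case by (cases ws) (auto simp: PsiW_def)
next
  case (Cons b bs)
  obtain w ws' where ws: "ws = w # ws'" using Cons.prems by (cases ws) auto
  have IH: "PsiW ws' (supp bs) = supp (xl bs ws') \<and> length (xl bs ws') = 12"
    using Cons ws by auto
  have lw: "length w = 12" using Cons.prems ws by auto
  have fin: "finite (Suc ` supp bs)" by simp
  show ?case
  proof (cases b)
    case True
    have "PsiW ws (supp (b # bs)) = sd (supp w) (PsiW ws (Suc ` supp bs))"
      unfolding PsiW_def using True ws fin by (simp add: supp_Cons)
    also have "\<dots> = sd (supp w) (supp (xl bs ws'))" using IH ws PsiW_Suc by simp
    also have "\<dots> = supp (bx w (xl bs ws'))" using IH lw by (simp add: supp_bx)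
    finally show ?thesis using True ws IH lw by simp
  next
    case False
    then show ?thesis using IH ws PsiW_Suc by (simp add: supp_Cons)
  qed
qed

lemma Psi_PsiW: "Psi R = PsiW hsb R"
  by (simp add: Psi_def PsiW_def h_def[abs_def])

lemma hsb_len: "\<forall>w\<in>set hsb. length w = 12"
  using hsb_facts(2) by (simp add: list_all_iff)

lemma Psi_h_low: "i < 12 \<Longrightarrow> Psi (h i) = {i}"
proof -
  assume i: "i < 12"
  have l: "length (hsb ! i) \<le> length hsb" using hsb_len hsb_facts(1) i by (simp add: list_all_iff)
  have "Psi (h i) = supp (xl (hsb ! i) hsb)"
    using PsiW_xl[OF hsb_len l] by (simp add: Psi_PsiW h_def)
  also have "xl (hsb ! i) hsb = map (\<lambda>l. xl l hsb) (take 12 hsb) ! i" using i hsb_facts(1) by simp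
  also have "\<dots> = map (\<lambda>k. k = i) [0..<12]" using i by (simp add: comp_xl U12_def)
  finally show ?thesis using i by (simp add: supp_unit)
qed

lemma Psi_Psi: "A \<subseteq> {..<12} \<Longrightarrow> Psi (Psi A) = A"
proof -
  assume A: "A \<subseteq> {..<12}"
  have "finite A" using A finite_subset by blast
  then show ?thesis using A
  proof (induction A rule: finite_induct)
    case empty then show ?case by simp
  next
    case (insert i A)
    have i: "i < 12" using insert by auto
    have "A \<subseteq> {..<24}" using insert by auto
    then have fA: "finite (Psi A)" using Psi_range[of A] insert by auto
    have "Psi (Psi (insert i A)) = Psi (sd (h i) (Psi A))" using insert by (simp add: Psi_insert)
    also have "\<dots> = sd (Psi (h i)) (Psi (Psi A))" using h_facts[of i] i fA by (simp add: Psi_sd)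
    also have "\<dots> = sd {i} A" using insert Psi_h_low[OF i] by simp
    finally show ?case using insert by (auto simp: sd_def)
  qed
qed

lemma take_hsb: "i < 12 \<Longrightarrow> take 12 hsb ! i = hsb ! i" by simp

lemma len3: "length xs = 3 \<Longrightarrow> \<exists>a b c. xs = [a, b, c]"
  by (cases xs; cases "tl xs"; cases "tl (tl xs)") auto

lemma sort3:
  fixes x y z :: nat
  assumes "card {x, y, z} = 3"
  shows "\<exists>a b c. {x, y, z} = {a, b, c} \<and> a < b \<and> b < c"
proof -
  let ?L = "sorted_list_of_set {x, y, z}"
  have "length ?L = 3" using assms by (simp only: length_sorted_list_of_set)
  then obtain a b c where L: "?L = [a, b, c]" using len3 by blast
  have gen1: "\<And>S::nat set. sorted_wrt (<) (sorted_list_of_set S)" by simp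
  have gen2: "\<And>S::nat set. finite S \<Longrightarrow> set (sorted_list_of_set S) = S" by simp
  have "sorted_wrt (<) ?L" by (rule gen1)
  then have "a < b" "b < c" using L by auto
  moreover have "set ?L = {x, y, z}" by (rule gen2) simp
  then have "{x, y, z} = {a, b, c}" using L by simp
  ultimately show ?thesis by blast
qed

lemma card_Psi_pair: "a < b \<Longrightarrow> b < 12 \<Longrightarrow> 5 \<le> card (Psi {a, b})"
proof -
  assume ab: "a < b" "b < 12"
  have "Psi {a, b} = sd (h a) (h b)" using ab by (simp add: Psi_insert)
  also have "\<dots> = supp (bx (hsb ! a) (hsb ! b))"
    using hsb_len hsb_facts(1) ab by (simp add: supp_bx h_def)
  finally have e: "card (Psi {a, b}) = weight (bx (hsb ! a) (hsb ! b))" by (simp add: weight_supp)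
  show ?thesis using lp_nth[OF comp_k2, of a b] ab hsb_facts(1) e by simp
qed

lemma card_Psi_triple: "a < b \<Longrightarrow> b < c \<Longrightarrow> c < 12 \<Longrightarrow> 4 \<le> card (Psi {a, b, c})"
proof -
  assume abc: "a < b" "b < c" "c < 12"
  have "Psi {a, b, c} = sd (h a) (sd (h b) (h c))" using abc by (simp add: Psi_insert)
  also have "\<dots> = supp (bx (hsb ! a) (bx (hsb ! b) (hsb ! c)))"
    using hsb_len hsb_facts(1) abc by (simp add: supp_bx h_def)
  finally have e: "card (Psi {a, b, c}) = weight (bx (hsb ! a) (bx (hsb ! b) (hsb ! c)))" by (simp add: weight_supp)
  show ?thesis using lt_nth[OF comp_k3, of a b c] abc hsb_facts(1) e by simp
qed

lemma K2:
  assumes A: "A \<subseteq> {..<12}" "A \<noteq> {}" "card A \<le> 3"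
  shows "7 \<le> card A + card (Psi A)"
proof -
  have fA: "finite A" using A finite_subset by blast
  then have "card A \<noteq> 0" using A by simp
  then consider "card A = 1" | "card A = 2" | "card A = 3" using A by linarith
  then show ?thesis
  proof cases
    case 1
    then obtain a where "A = {a}" by (auto simp: card_1_singleton_iff)
    then have a: "A = {a}" "a < 12" using A by auto
    have "weight (hsb ! a) \<ge> 6" using comp_k1 a hsb_facts(1) by (auto simp: list_all_length)
    then show ?thesis using a by (simp add: h_def weight_supp)
  next
    case 2
    then obtain x y where xy: "A = {x, y}" "x \<noteq> y" by (auto simp: card_2_iff)
    define a where "a = min x y"
    define b where "b = max x y"
    have ab: "A = {a, b}" "a < b" using xy by (auto simp: a_def b_def min_def max_def)
    then have "b < 12" using A by auto
    then show ?thesis using card_Psi_pair[of a b] ab 2 by simp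
  next
    case 3
    then obtain a b c where abc: "A = {a, b, c}" "a < b" "b < c"
      using sort3 by (metis card_3_iff)
    then have "c < 12" using A by auto
    then show ?thesis using card_Psi_triple[of a b c] abc 3 by simp
  qed
qed

lemma Psi_high: "R \<subseteq> {12..<24} \<Longrightarrow> Psi R = (\<lambda>i. i - 12) ` R"
proof -
  assume R: "R \<subseteq> {12..<24}"
  have "finite R" using R finite_subset by blast
  then show ?thesis using R
  proof (induction R rule: finite_induct)
    case empty then show ?case by simp
  next
    case (insert i R)
    have hi: "h i = {i - 12}" using h_high[of "i - 12"] insert by auto
    have "i - 12 \<notin> (\<lambda>i. i - 12) ` R"
    proof
      assume "i - 12 \<in> (\<lambda>i. i - 12) ` R"
      then obtain k where k: "k \<in> R" "i - 12 = k - 12" by auto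
      moreover have "12 \<le> k" "12 \<le> i" using insert k by auto
      ultimately have "i = k" by simp
      then show False using insert k by simp
    qed
    then show ?case using insert hi by (auto simp: Psi_insert sd_def)
  qed
qed

lemma minweight:
  assumes R: "R \<subseteq> {..<24}" "R \<noteq> {}" "Psi R = {}"
  shows "7 \<le> card R"
proof -
  define R1 where "R1 = R \<inter> {..<12}"
  define R2 where "R2 = R - {..<12}"
  have fR: "finite R" using R finite_subset by blast
  have f1: "finite R1" "finite R2" using fR by (auto simp: R1_def R2_def)
  have R2s: "R2 \<subseteq> {12..<24}" using R by (auto simp: R2_def)
  have R1s: "R1 \<subseteq> {..<12}" by (auto simp: R1_def)
  have sdR: "R = sd R1 R2" by (auto simp: R1_def R2_def sd_def)
  have cR: "card R = card R1 + card R2"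
    unfolding sdR using f1 by (subst card_Un_disjoint[symmetric]) (auto simp: R1_def R2_def sd_def intro: arg_cong[where f=card])
  have P2: "Psi R2 = (\<lambda>i. i - 12) ` R2" using Psi_high[OF R2s] .
  have "inj_on (\<lambda>i. i - 12) R2"
  proof (rule inj_onI)
    fix x y assume "x \<in> R2" "y \<in> R2" "x - 12 = y - 12"
    moreover have "12 \<le> x" "12 \<le> y" using R2s \<open>x \<in> R2\<close> \<open>y \<in> R2\<close> by auto
    ultimately show "x = y" by simp
  qed
  then have c2: "card (Psi R2) = card R2" using P2 by (simp add: card_image)
  have "sd (Psi R1) (Psi R2) = {}" using R(3) sdR f1 Psi_sd by metis
  then have eq: "Psi R1 = Psi R2" by (auto simp: sd_def)
  then have cR': "card R = card R1 + card (Psi R1)" using cR c2 by simp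
  show ?thesis
  proof (cases "R1 = {}")
    case True
    then have "Psi R2 = {}" using eq by simp
    then have "R2 = {}" using P2 by simp
    then show ?thesis using True sdR R(2) by (simp add: sd_def)
  next
    case ne: False
    show ?thesis
    proof (cases "card R1 \<le> 3")
      case True then show ?thesis using K2[OF R1s ne True] cR' by simp
    next
      case False
      show ?thesis
      proof (cases "card (Psi R1) \<le> 2")
        case small: True
        let ?v = "Psi R1"
        have "R1 \<subseteq> {..<24}" using R1s by auto
        then have vs: "?v \<subseteq> {..<12}" using Psi_range[of R1] f1 by auto
        have PP: "Psi ?v = R1" using Psi_Psi[OF R1s] .
        have "?v \<noteq> {}" using PP ne by auto
        then have "7 \<le> card ?v + card (Psi ?v)" using K2[OF vs] small by simp
        then show ?thesis using PP cR' by simp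
      next
        case False
        then show ?thesis using cR' \<open>\<not> card R1 \<le> 3\<close> by simp
      qed
    qed
  qed
qed



definition Pats :: "nat set set" where
  "Pats = {P. P \<subseteq> {..<24} \<and> (card P = 1 \<or> card P = 3)}"

definition Odd :: "nat set set" where
  "Odd = {t. t \<subseteq> {..<12} \<and> odd (card t)}"

lemma card_Pats: "card Pats = 2048"
proof -
  have e: "Pats = {P. P \<subseteq> {..<24} \<and> card P = 1} \<union> {P. P \<subseteq> {..<24} \<and> card P = 3}"
    by (auto simp: Pats_def)
  have f: "finite {P. P \<subseteq> {..<(24::nat)} \<and> card P = k}" for k
    by (rule finite_subset[of _ "Pow {..<24}"]) auto
  have "card Pats = card {P. P \<subseteq> {..<(24::nat)} \<and> card P = 1} + card {P. P \<subseteq> {..<(24::nat)} \<and> card P = 3}"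
    unfolding e by (rule card_Un_disjoint[OF f f]) auto
  also have "\<dots> = (24 choose 1) + (24 choose 3)" by (simp add: n_subsets)
  also have "\<dots> = 2048" by (simp add: numeral_eq_Suc binomial_Suc_Suc)
  finally show ?thesis .
qed

lemma card_Odd: "card Odd = 2048"
proof -
  define Ev where "Ev = {t. t \<subseteq> {..<(12::nat)} \<and> even (card t)}"
  have fO: "finite Odd" by (rule finite_subset[of _ "Pow {..<12}"]) (auto simp: Odd_def)
  have fE: "finite Ev" by (rule finite_subset[of _ "Pow {..<12}"]) (auto simp: Ev_def)
  have U: "Pow {..<12} = Odd \<union> Ev" by (auto simp: Odd_def Ev_def)
  have "card (Pow {..<(12::nat)}) = 4096" by (simp add: card_Pow)
  then have s: "card Odd + card Ev = 4096" unfolding U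
    by (subst (asm) card_Un_disjoint[OF fO fE]) (auto simp: Odd_def Ev_def)
  have par: "odd (card (sd t {0})) = even (card t)" if "t \<subseteq> {..<12}" for t :: "nat set"
  proof -
    have "finite t" using that finite_subset by blast
    then show ?thesis using card_sd_parity[of t "{0}"] by simp
  qed
  have sub: "sd t {0} \<subseteq> {..<12}" if "t \<subseteq> {..<12}" for t :: "nat set"
    using that by (auto simp: sd_def)
  have inv: "sd (sd t {0}) {0} = t" for t :: "nat set" by (auto simp: sd_def)
  have inj: "inj_on (\<lambda>t. sd t {0}) A" for A :: "nat set set"
  proof (rule inj_onI)
    fix x y :: "nat set" assume "x \<in> A" "y \<in> A" "sd x {0} = sd y {0}"
    then have "sd (sd x {0}) {0} = sd (sd y {0}) {0}" by simp
    then show "x = y" by (simp only: inv)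
  qed
  have i1: "(\<lambda>t. sd t {0}) ` Odd \<subseteq> Ev"
  proof
    fix x assume "x \<in> (\<lambda>t. sd t {0}) ` Odd"
    then obtain t where t: "t \<in> Odd" "x = sd t {0}" by auto
    then show "x \<in> Ev" using par[of t] sub[of t] by (auto simp: Odd_def Ev_def)
  qed
  have i2: "(\<lambda>t. sd t {0}) ` Ev \<subseteq> Odd"
  proof
    fix x assume "x \<in> (\<lambda>t. sd t {0}) ` Ev"
    then obtain t where t: "t \<in> Ev" "x = sd t {0}" by auto
    then show "x \<in> Odd" using par[of t] sub[of t] by (auto simp: Odd_def Ev_def)
  qed
  have "card Odd \<le> card Ev" by (rule card_inj_on_le[OF inj i1 fE])
  moreover have "card Ev \<le> card Odd" by (rule card_inj_on_le[OF inj i2 fO])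
  ultimately show ?thesis using s by simp
qed

lemma Pats_fin: "P \<in> Pats \<Longrightarrow> finite P \<and> P \<subseteq> {..<24} \<and> card P \<le> 3"
  unfolding Pats_def using finite_subset by auto

lemma Psi_Pats_sub: "Psi ` Pats \<subseteq> Odd"
proof
  fix t assume "t \<in> Psi ` Pats"
  then obtain P where P: "P \<in> Pats" "t = Psi P" by auto
  then have "odd (card P)" by (auto simp: Pats_def)
  then show "t \<in> Odd" using Psi_range[of P] Pats_fin[OF P(1)] P(2) by (auto simp: Odd_def)
qed

lemma Psi_inj: "inj_on Psi Pats"
proof (rule inj_onI)
  fix P P' assume P: "P \<in> Pats" "P' \<in> Pats" "Psi P = Psi P'"
  define R where "R = sd P P'"
  have fP: "finite P" "finite P'" using Pats_fin P by auto
  have "Psi R = sd (Psi P) (Psi P')" unfolding R_def using fP by (simp add: Psi_sd)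
  then have PR: "Psi R = {}" using P(3) by (simp add: sd_def)
  have "R \<subseteq> P \<union> P'" by (auto simp: R_def sd_def)
  then have "card R \<le> card (P \<union> P')" using fP by (simp add: card_mono)
  also have "\<dots> \<le> card P + card P'" by (rule card_Un_le)
  finally have "card R \<le> 6" using Pats_fin[OF P(1)] Pats_fin[OF P(2)] by simp
  moreover have "R \<subseteq> {..<24}" using Pats_fin P by (auto simp: R_def sd_def)
  ultimately have "R = {}" using minweight[of R] PR by fastforce
  then show "P = P'" by (auto simp: R_def sd_def)
qed

lemma Psi_Pats: "Psi ` Pats = Odd"
proof -
  have fO: "finite Odd" by (rule finite_subset[of _ "Pow {..<12}"]) (auto simp: Odd_def)
  have "card (Psi ` Pats) = 2048" using Psi_inj card_Pats by (simp add: card_image)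
  then show ?thesis using card_subset_eq[OF fO Psi_Pats_sub] card_Odd by simp
qed

lemma Psi_eq_Pats: "P \<in> Pats \<Longrightarrow> P2 \<in> Pats \<Longrightarrow> Psi P = Psi P2 \<Longrightarrow> P = P2"
  using Psi_inj by (auto simp: inj_on_def)

lemma single_Pats: "a < 24 \<Longrightarrow> {a} \<in> Pats" by (simp add: Pats_def)

lemma triple_Pats: "a < 24 \<Longrightarrow> b < 24 \<Longrightarrow> c < 24 \<Longrightarrow> a \<noteq> b \<Longrightarrow> b \<noteq> c \<Longrightarrow> a \<noteq> c \<Longrightarrow> {a, b, c} \<in> Pats"
  by (simp add: Pats_def)

lemma Psi3: "a \<noteq> b \<Longrightarrow> b \<noteq> c \<Longrightarrow> a \<noteq> c \<Longrightarrow> Psi {a, b, c} = sd (h a) (sd (h b) (h c))"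
  by (simp add: Psi_insert)

definition Rs :: "nat set \<Rightarrow> (nat \<times> nat) set" where
  "Rs t = {(i, j) \<in> PR. \<exists>m<24. sd (h m) (sd (h i) (h j)) = t}"

lemma sd_left: "sd x (sd x y) = y" by (auto simp: sd_def)
lemma sd_right: "sd x (sd y x) = y" by (auto simp: sd_def)

lemma Rs_single:
  assumes a: "a < 24"
  shows "Rs (h a) = {(i, j) \<in> PR. i = a \<or> j = a}"
proof
  show "Rs (h a) \<subseteq> {(i, j) \<in> PR. i = a \<or> j = a}"
  proof
    fix p assume p: "p \<in> Rs (h a)"
    obtain i j where pij: "p = (i, j)" by (cases p)
    obtain m where ij: "(i, j) \<in> PR" "m < 24" "sd (h m) (sd (h i) (h j)) = h a"
      using p unfolding pij Rs_def by blast
    have ij2: "i < j" "j < 24" using ij(1) by (auto simp: PR_def)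
    have "i = a \<or> j = a"
    proof (cases "m = i")
      case True
      then have "Psi {j} = Psi {a}" using ij(3) by (simp add: sd_left)
      then have "{j} = {a}" by (rule Psi_eq_Pats[OF single_Pats[OF ij2(2)] single_Pats[OF a]])
      then show ?thesis by simp
    next
      case mi: False
      show ?thesis
      proof (cases "m = j")
        case True
        then have "Psi {i} = Psi {a}" using ij(3) by (simp add: sd_right)
        moreover have "i < 24" using ij2 by simp
        ultimately have "{i} = {a}" using Psi_eq_Pats[OF single_Pats single_Pats[OF a]] by blast
        then show ?thesis by simp
      next
        case False
        have d: "m \<noteq> i" "i \<noteq> j" "m \<noteq> j" using mi False ij2 by auto
        then have "Psi {m, i, j} = Psi {a}" using ij(3) by (simp add: Psi3)
        moreover have "{m, i, j} \<in> Pats" using d ij2 ij(2) by (intro triple_Pats) auto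
        ultimately have "{m, i, j} = {a}" using Psi_eq_Pats single_Pats[OF a] by blast
        then have False using d by (metis insert_absorb insert_iff insert_not_empty singleton_insert_inj_eq)
        then show ?thesis ..
      qed
    qed
    then show "p \<in> {(i, j) \<in> PR. i = a \<or> j = a}" using ij(1) pij by simp
  qed
  show "{(i, j) \<in> PR. i = a \<or> j = a} \<subseteq> Rs (h a)"
  proof
    fix p assume p: "p \<in> {(i, j) \<in> PR. i = a \<or> j = a}"
    obtain i j where pij: "p = (i, j)" by (cases p)
    have ij: "(i, j) \<in> PR" "i = a \<or> j = a" using p pij by auto
    have ij2: "i < j" "j < 24" using ij(1) by (auto simp: PR_def)
    have "\<exists>m<24. sd (h m) (sd (h i) (h j)) = h a"
      using ij(2)
    proof
      assume "i = a"
      then show ?thesis using ij2 by (intro exI[of _ j]) (simp add: sd_right)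
    next
      assume "j = a"
      then show ?thesis using ij2 by (intro exI[of _ i]) (simp add: sd_left)
    qed
    then show "p \<in> Rs (h a)" unfolding Rs_def using ij(1) pij by simp
  qed
qed



lemma card_single_pairs:
  assumes a: "a < 24"
  shows "card {(i, j) \<in> PR. i = a \<or> j = a} = 23"
proof -
  have e: "{(i, j) \<in> PR. i = a \<or> j = a} = (\<lambda>i. (i, a)) ` {..<a} \<union> (\<lambda>j. (a, j)) ` {a<..<24}"
    using a by (auto simp: PR_def)
  have "card ((\<lambda>i. (i, a)) ` {..<a} \<union> (\<lambda>j. (a, j)) ` {a<..<24}) =
        card ((\<lambda>i. (i, a)) ` {..<a}) + card ((\<lambda>j. (a, j)) ` {a<..<(24::nat)})"
    by (rule card_Un_disjoint) auto
  also have "\<dots> = a + (23 - a)" by (simp add: card_image inj_on_def)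
  finally show ?thesis using e a by simp
qed

lemma Rs_triple:
  assumes P: "P \<in> Pats" "card P = 3"
  shows "Rs (Psi P) = {(i, j) \<in> PR. i \<in> P \<and> j \<in> P}"
proof
  have P24: "P \<subseteq> {..<24}" "finite P" using Pats_fin[OF P(1)] by auto
  show "Rs (Psi P) \<subseteq> {(i, j) \<in> PR. i \<in> P \<and> j \<in> P}"
  proof
    fix p assume p: "p \<in> Rs (Psi P)"
    obtain i j where pij: "p = (i, j)" by (cases p)
    obtain m where ij: "(i, j) \<in> PR" "m < 24" "sd (h m) (sd (h i) (h j)) = Psi P"
      using p unfolding pij Rs_def by blast
    have ij2: "i < j" "j < 24" using ij(1) by (auto simp: PR_def)
    have "i \<in> P \<and> j \<in> P"
    proof (cases "m = i")
      case True
      then have "Psi {j} = Psi P" using ij(3) by (simp add: sd_left)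
      then have "{j} = P" by (rule Psi_eq_Pats[OF single_Pats[OF ij2(2)] P(1)])
      then show ?thesis using P(2) by auto
    next
      case mi: False
      show ?thesis
      proof (cases "m = j")
        case True
        then have "Psi {i} = Psi P" using ij(3) by (simp add: sd_right)
        moreover have "i < 24" using ij2 by simp
        ultimately have "{i} = P" using Psi_eq_Pats[OF single_Pats P(1)] by blast
        then show ?thesis using P(2) by auto
      next
        case False
        have d: "m \<noteq> i" "i \<noteq> j" "m \<noteq> j" using mi False ij2 by auto
        then have "Psi {m, i, j} = Psi P" using ij(3) by (simp add: Psi3)
        moreover have "{m, i, j} \<in> Pats" using d ij2 ij(2) by (intro triple_Pats) auto
        ultimately have "{m, i, j} = P" using Psi_eq_Pats P(1) by blast
        then show ?thesis by auto
      qed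
    qed
    then show "p \<in> {(i, j) \<in> PR. i \<in> P \<and> j \<in> P}" using ij(1) pij by simp
  qed
  show "{(i, j) \<in> PR. i \<in> P \<and> j \<in> P} \<subseteq> Rs (Psi P)"
  proof
    fix p assume p: "p \<in> {(i, j) \<in> PR. i \<in> P \<and> j \<in> P}"
    obtain i j where pij: "p = (i, j)" by (cases p)
    have ij: "(i, j) \<in> PR" "i \<in> P" "j \<in> P" using p pij by auto
    have ij2: "i < j" "j < 24" using ij(1) by (auto simp: PR_def)
    have "card (P - {i, j}) = 1" using P(2) P24 ij ij2 by (subst card_Diff_subset) auto
    then obtain m where m: "P - {i, j} = {m}" by (auto simp: card_1_singleton_iff)
    then have mP: "m \<in> P" "m \<noteq> i" "m \<noteq> j" by auto
    have "{m, i, j} \<subseteq> P" using mP ij by auto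
    moreover have "card {m, i, j} = 3" using mP ij2 by simp
    ultimately have eqP: "{m, i, j} = P" using card_subset_eq[OF P24(2)] P(2) by metis
    have "Psi P = sd (h m) (sd (h i) (h j))" using eqP[symmetric] mP ij2 by (simp add: Psi3)
    moreover have "m < 24" using mP P24 by auto
    ultimately have "\<exists>m<24. sd (h m) (sd (h i) (h j)) = Psi P" by auto
    then show "p \<in> Rs (Psi P)" unfolding Rs_def using ij(1) pij by simp
  qed
qed

lemma card_triple_pairs:
  assumes P: "P \<subseteq> {..<24}" "card P = 3"
  shows "card {(i, j) \<in> PR. i \<in> P \<and> j \<in> P} = 3"
proof -
  obtain x y z where "P = {x, y, z}" "x \<noteq> y" "y \<noteq> z" "x \<noteq> z" using P(2) by (auto simp: card_3_iff)
  then obtain a b c where abc: "P = {a, b, c}" "a < b" "b < c" using sort3 P(2) by metis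
  have c: "c < 24" using P(1) abc by auto
  have "{(i, j) \<in> PR. i \<in> P \<and> j \<in> P} = {(a, b), (a, c), (b, c)}"
    using abc c by (auto simp: PR_def)
  then show ?thesis using abc by simp
qed

definition ST :: "nat set \<Rightarrow> nat set set" where
  "ST s0 = (\<lambda>i. sd s0 (h i)) ` {..<24}"

lemma sd_eq_iff: "(sd (sd s x) y = sd s0 z) \<longleftrightarrow> (sd z (sd x y) = sd s s0)"
  unfolding sd_def set_eq_iff by blast

lemma sd_eq2: "(s = sd s0 x) \<longleftrightarrow> (x = sd s s0)"
  unfolding sd_def set_eq_iff by blast

lemma good_T:
  assumes s0: "s0 \<in> Odd"
  shows "good 3 (ST s0)"
  unfolding good_def
proof (intro allI impI)
  fix s :: "nat set" assume s: "s \<subseteq> {..<12} \<and> even (card s)"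
  define t where "t = sd s s0"
  have fs: "finite s" "finite s0" using s s0 finite_subset by (auto simp: Odd_def)
  have tO: "t \<in> Odd" using s s0 card_sd_parity[OF fs] by (auto simp: Odd_def t_def sd_def)
  have pt: "sd (sd s (h i)) (h j) \<in> ST s0 \<longleftrightarrow> (\<exists>m<24. sd (h m) (sd (h i) (h j)) = t)" for i j
    unfolding ST_def t_def image_iff by (simp add: sd_eq_iff Bex_def)
  have "{(i, j) \<in> PR. sd (sd s (h i)) (h j) \<in> ST s0} = Rs t"
    unfolding Rs_def by (simp only: pt)
  then have Qe: "Q (ST s0) s = card (Rs t)" by (simp add: Q_def)
  have mem: "s \<in> ST s0 \<longleftrightarrow> (\<exists>i<24. h i = t)"
  proof -
    have "s \<in> ST s0 \<longleftrightarrow> (\<exists>i<24. s = sd s0 (h i))" by (auto simp: ST_def)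
    also have "\<dots> \<longleftrightarrow> (\<exists>i<24. h i = t)" unfolding t_def
    proof (intro iffI; elim exE conjE)
      fix i assume "i < 24" "s = sd s0 (h i)"
      then show "\<exists>i<24. h i = sd s s0" using sd_eq2[of s s0 "h i"] by blast
    next
      fix i assume "i < 24" "h i = sd s s0"
      then show "\<exists>i<24. s = sd s0 (h i)" using sd_eq2[of s s0 "h i"] by blast
    qed
    finally show ?thesis .
  qed
  obtain P where P: "P \<in> Pats" "t = Psi P" using tO Psi_Pats by blast
  then consider "card P = 1" | "card P = 3" by (auto simp: Pats_def)
  then show "Q (ST s0) s = 3 + (if s \<in> ST s0 then 20 else 0)"
  proof cases
    case 1
    then obtain a where a: "P = {a}" by (auto simp: card_1_singleton_iff)
    then have a24: "a < 24" using P Pats_fin by auto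
    have "t = h a" using P a by simp
    then show ?thesis using Qe Rs_single[OF a24] card_single_pairs[OF a24] mem a24 by auto
  next
    case 2
    have nm: "\<not> (\<exists>i<24. h i = t)"
    proof
      assume "\<exists>i<24. h i = t"
      then obtain i where i: "i < 24" "h i = t" by auto
      then have "Psi {i} = Psi P" using P by simp
      then have "{i} = P" using Psi_eq_Pats[OF single_Pats[OF i(1)] P(1)] by blast
      then show False using 2 by auto
    qed
    show ?thesis using Qe Rs_triple[OF P(1) 2] card_triple_pairs[of P] Pats_fin[OF P(1)] 2 P(2) mem nm by simp
  qed
qed



definition s0l :: "bool list list" where "s0l = [[False,False,False,True,False,False,False,False,False,False,False,False], [False,False,True,True,True,True,True,False,False,False,False,False], [False,False,True,False,False,True,False,False,True,False,False,False], [False,False,False,False,True,False,True,False,True,False,False,False], [False,False,True,True,False,True,False,False,False,True,False,True], [False,False,False,True,True,False,True,False,False,True,False,True], [False,False,False,False,False,False,False,False,True,True,False,True]]"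
definition DIF :: "bool list list" where "DIF = [[False,False,True,False,True,True,True,False,False,False,False,False], [False,False,True,True,False,True,False,False,True,False,False,False], [False,False,False,True,True,False,True,False,True,False,False,False], [False,False,True,False,False,True,False,False,False,True,False,True], [False,False,False,False,True,False,True,False,False,True,False,True], [False,False,False,True,False,False,False,False,True,True,False,True], [False,False,False,True,True,False,True,False,True,False,False,False], [False,False,True,True,False,True,False,False,True,False,False,False], [False,False,False,False,True,False,True,False,False,True,False,True], [False,False,True,False,False,True,False,False,False,True,False,True], [False,False,True,True,True,True,True,False,True,True,False,True], [False,False,True,False,True,True,True,False,False,False,False,False], [False,False,False,True,False,False,False,False,True,True,False,True], [False,False,True,True,True,True,True,False,True,True,False,True], [False,False,True,False,False,True,False,False,False,True,False,True], [False,False,True,True,True,True,True,False,True,True,False,True], [False,False,False,True,False,False,False,False,True,True,False,True], [False,False,False,False,True,False,True,False,False,True,False,True], [False,False,True,False,True,True,True,False,False,False,False,False], [False,False,True,True,False,True,False,False,True,False,False,False], [False,False,False,True,True,False,True,False,True,False,False,False]]"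
definition freel :: "bool list list" where "freel = [[True,False,False,False,True], [False,True,False,False,True], [True,True,False,False,True], [False,False,True,False,True], [True,False,True,False,True], [False,True,True,False,True], [True,True,True,False,True], [False,False,False,True,True], [True,False,False,True,True], [False,True,False,True,True], [True,True,False,True,True], [False,False,True,True,True], [True,False,True,True,True], [False,True,True,True,True], [True,True,True,True,True]]"

definition z5 :: "bool list" where "z5 = [False,False,False,False,False]"

definition Dl :: "bool list list" where "Dl = freel @ [z5]"

lemma comp_s0: "list_all (\<lambda>l. length l = 12 \<and> odd (weight l) \<and> map (\<lambda>C. odd (length (filter (\<lambda>k. k < length l \<and> l ! k) C))) Cs = z5) s0l"
  by (simp add: s0l_def weight_def Cs_def z5_def)

lemma comp_s0_len: "length s0l = 7" by (simp add: s0l_def)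

lemma comp_dif: "lp (\<lambda>u v. bx u v \<in> set DIF) s0l" "z12 \<notin> set DIF"
  by (simp_all add: s0l_def DIF_def bx_def z12_def)

lemma comp_lab: "lp (\<lambda>(l1, w1) (l2, w2). l1 = l2 \<longrightarrow> bx w1 w2 \<notin> set DIF) (zip labl hsb)"
  by (simp add: labl_def hsb_def DIF_def bx_def)

lemma comp_free: "list_all (\<lambda>u. u \<notin> set freel) labl" "distinct Dl" "\<forall>u\<in>set Dl. length u = 5" "length freel = 15"
  by (simp_all add: labl_def freel_def Dl_def z5_def)

lemma len_labl24: "length labl = 24" by (simp add: labl_def)

definition s0 :: "nat \<Rightarrow> nat set" where "s0 p = supp (s0l ! p)"

lemma s0_props:
  assumes p: "p < 7"
  shows "s0 p \<in> Odd" "dix (s0 p) = z5" "length (s0l ! p) = 12"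
proof -
  have P: "length (s0l ! p) = 12 \<and> odd (weight (s0l ! p)) \<and> map (\<lambda>C. odd (length (filter (\<lambda>k. k < length (s0l ! p) \<and> s0l ! p ! k) C))) Cs = z5"
  proof -
    have pl: "p < length s0l" using p comp_s0_len by simp
    show ?thesis using comp_s0 pl unfolding list_all_length by blast
  qed
  then show "s0 p \<in> Odd" by (auto simp: s0_def Odd_def supp_def weight_supp)
  have dC: "\<forall>C\<in>set Cs. distinct C" by (simp add: Cs_def)
  have "map (\<lambda>C. odd (card (supp (s0l ! p) \<inter> set C))) Cs = map (\<lambda>C. odd (length (filter (\<lambda>k. k < length (s0l ! p) \<and> s0l ! p ! k) C))) Cs"
    by (rule map_cong) (auto simp: card_supp_inter dC)
  then show "dix (s0 p) = z5" using conjunct2[OF conjunct2[OF P]] unfolding dix_def s0_def by simp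
  show "length (s0l ! p) = 12" using P by simp
qed

lemma supp_inj: "length u = length v \<Longrightarrow> supp u = supp v \<Longrightarrow> u = v"
  by (auto simp: supp_def list_eq_iff_nth_eq set_eq_iff)

lemma bx_z5: "length u = 5 \<Longrightarrow> bx z5 u = u"
  by (auto simp: bx_def z5_def list_eq_iff_nth_eq numeral_eq_Suc less_Suc_eq nth_Cons')

lemma bx_self: "bx w w = replicate (length w) False"
  by (auto simp: bx_def list_eq_iff_nth_eq)

lemma bx_comm: "bx u v = bx v u"
  by (auto simp: bx_def list_eq_iff_nth_eq)

lemma z12_rep: "replicate 12 False = z12" by (simp add: z12_def numeral_eq_Suc)

lemma dix_sd_h: "finite a \<Longrightarrow> i < 24 \<Longrightarrow> dix (sd a (h i)) = bx (dix a) (labl ! i)"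
  using dix_sd[of a "h i"] h_facts(2)[of i] dix_h[of i] by simp

lemma ST_disj:
  assumes pq: "p < q" "q < 7"
  shows "ST (s0 p) \<inter> ST (s0 q) = {}"
proof (rule ccontr)
  assume "ST (s0 p) \<inter> ST (s0 q) \<noteq> {}"
  then obtain i j where ij: "i < 24" "j < 24" "sd (s0 p) (h i) = sd (s0 q) (h j)"
    unfolding ST_def by auto
  have p7: "p < 7" using pq by simp
  have fp: "finite (s0 p)" "finite (s0 q)" by (simp_all add: s0_def)
  have "labl ! i = labl ! j"
  proof -
    have "dix (sd (s0 p) (h i)) = labl ! i"
      using dix_sd_h[OF fp(1) ij(1)] s0_props(2)[OF p7] bx_z5 len_labl[OF ij(1)] by simp
    moreover have "dix (sd (s0 q) (h j)) = labl ! j"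
      using dix_sd_h[OF fp(2) ij(2)] s0_props(2)[OF pq(2)] bx_z5 len_labl[OF ij(2)] by simp
    ultimately show ?thesis using ij(3) by simp
  qed
  have e1: "sd (s0 p) (s0 q) = sd (h i) (h j)" using ij(3) unfolding sd_def set_eq_iff by blast
  have lh: "length (hsb ! i) = 12" "length (hsb ! j) = 12" using hsb_len hsb_facts(1) ij by auto
  have "bx (s0l ! p) (s0l ! q) = bx (hsb ! i) (hsb ! j)"
    using e1 s0_props(3)[OF p7] s0_props(3)[OF pq(2)] lh
    by (intro supp_inj) (simp_all add: supp_bx s0_def h_def)
  moreover have "bx (s0l ! p) (s0l ! q) \<in> set DIF" using lp_nth[OF comp_dif(1) pq(1)] pq comp_s0_len by simp
  ultimately have inD: "bx (hsb ! i) (hsb ! j) \<in> set DIF" by simp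
  consider "i = j" | "i < j" | "j < i" by linarith
  then show False
  proof cases
    case 1 then show ?thesis using inD comp_dif(2) lh by (simp add: bx_self z12_rep)
  next
    case 2
    have "(\<lambda>(l1, w1) (l2, w2). l1 = l2 \<longrightarrow> bx w1 w2 \<notin> set DIF) (zip labl hsb ! i) (zip labl hsb ! j)"
      using lp_nth[OF comp_lab 2] ij len_labl24 hsb_facts(1) by simp
    then show ?thesis using inD \<open>labl ! i = labl ! j\<close> ij len_labl24 hsb_facts(1) by simp
  next
    case 3
    have "(\<lambda>(l1, w1) (l2, w2). l1 = l2 \<longrightarrow> bx w1 w2 \<notin> set DIF) (zip labl hsb ! j) (zip labl hsb ! i)"
      using lp_nth[OF comp_lab 3] ij len_labl24 hsb_facts(1) by simp
    then show ?thesis using inD \<open>labl ! i = labl ! j\<close> ij len_labl24 hsb_facts(1) bx_comm by simp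
  qed
qed

lemma ST_SD_disj:
  assumes p: "p < 7" and f: "f \<in> set freel"
  shows "ST (s0 p) \<inter> SDs f = {}"
proof (rule ccontr)
  assume "ST (s0 p) \<inter> SDs f \<noteq> {}"
  then obtain i where i: "i < 24" "dix (sd (s0 p) (h i)) = f" unfolding ST_def SDs_def by auto
  have fp: "finite (s0 p)" by (simp add: s0_def)
  have "dix (sd (s0 p) (h i)) = labl ! i"
    using dix_sd_h[OF fp i(1)] s0_props(2)[OF p] bx_z5 len_labl[OF i(1)] by simp
  then have "labl ! i \<in> set freel" using i f by simp
  then show False using comp_free(1) i len_labl24 by (simp add: list_all_length)
qed

definition TU :: "nat \<Rightarrow> nat set set" where "TU a = (\<Union>p<a. ST (s0 p))"
definition DU :: "nat \<Rightarrow> nat set set" where "DU b = (\<Union>q<b. SDs (Dl ! q))"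

lemma good_TU: "a \<le> 7 \<Longrightarrow> good (3 * a) (TU a)"
proof (induction a)
  case 0 then show ?case by (simp add: TU_def good_empty)
next
  case (Suc a)
  have e: "TU (Suc a) = TU a \<union> ST (s0 a)" by (auto simp: TU_def lessThan_Suc)
  have d: "TU a \<inter> ST (s0 a) = {}"
  proof -
    have False if "x \<in> ST (s0 p)" "x \<in> ST (s0 a)" "p < a" for x p
    proof -
      have "ST (s0 p) \<inter> ST (s0 a) = {}" using ST_disj[of p a] that(3) Suc.prems by simp
      then show False using that(1,2) by blast
    qed
    then show ?thesis unfolding TU_def by blast
  qed
  have "good (3 * a + 3) (TU a \<union> ST (s0 a))"
    using good_union[OF Suc.IH good_T[OF s0_props(1)] d] Suc.prems by simp
  moreover have "3 * Suc a = 3 * a + 3" by simp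
  ultimately show ?case using e by metis
qed

lemma good_all:
  assumes "a \<le> 7" "b \<le> 16" "a = 0 \<or> b \<le> 15"
  shows "good (3 * a + 8 * b) (TU a \<union> DU b)"
  using assms
proof (induction b)
  case 0 then show ?case using good_TU by (simp add: DU_def)
next
  case (Suc b)
  have e: "TU a \<union> DU (Suc b) = (TU a \<union> DU b) \<union> SDs (Dl ! b)" by (auto simp: DU_def lessThan_Suc)
  have lD: "length Dl = 16" using comp_free(4) by (simp add: Dl_def)
  have lb: "length (Dl ! b) = 5" using comp_free(3) lD Suc.prems by simp
  have d1: "TU a \<inter> SDs (Dl ! b) = {}"
  proof (cases "a = 0")
    case True then show ?thesis by (simp add: TU_def)
  next
    case False
    then have "b < 15" using Suc.prems by simp
    then have "Dl ! b \<in> set freel" using comp_free(4) by (simp add: Dl_def nth_append)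
    have False if "x \<in> ST (s0 p)" "x \<in> SDs (Dl ! b)" "p < a" for x p
    proof -
      have "ST (s0 p) \<inter> SDs (Dl ! b) = {}" using ST_SD_disj[of p "Dl ! b"] that(3) Suc.prems \<open>Dl ! b \<in> set freel\<close> by simp
      then show False using that(1,2) by blast
    qed
    then show ?thesis unfolding TU_def by blast
  qed
  have d2: "DU b \<inter> SDs (Dl ! b) = {}"
  proof -
    have "Dl ! q \<noteq> Dl ! b" if "q < b" for q
      using comp_free(2) that Suc.prems lD by (simp add: nth_eq_iff_index_eq)
    then show ?thesis by (auto simp: DU_def SDs_def)
  qed
  have "good (3 * a + 8 * b + 8) ((TU a \<union> DU b) \<union> SDs (Dl ! b))"
    using good_union[OF Suc.IH good_D[OF lb]] d1 d2 Suc.prems by auto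
  moreover have "3 * a + 8 * Suc b = 3 * a + 8 * b + 8" by simp
  ultimately show ?case using e by metis
qed

lemma decomp:
  fixes c :: nat
  assumes "c \<in> {3, 6, 8, 9, 11, 12} \<union> {14..128}"
  shows "\<exists>a b. a \<le> 7 \<and> b \<le> 16 \<and> (a = 0 \<or> b \<le> 15) \<and> c = 3 * a + 8 * b"
proof -
  have "c \<in> {3, 6, 8, 9, 11, 12} \<or> (14 \<le> c \<and> c \<le> 128)" using assms by auto
  then show ?thesis
  proof
    assume "c \<in> {3, 6, 8, 9, 11, 12}"
    then show ?thesis by auto presburger+
  next
    assume "14 \<le> c \<and> c \<le> 128"
    then show ?thesis by presburger
  qed
qed

theorem theorem1:
  fixes c :: nat
  assumes "c \<in> {3, 6, 8, 9, 11, 12} \<union> {14..128}"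
  shows "\<exists>C. perfect_coloring_params (halved_cube_vertices 24) halved_cube_adj C
                (20 + c) (256 - c) c (276 - c)"
proof -
  obtain a b where ab: "a \<le> 7" "b \<le> 16" "a = 0 \<or> b \<le> 15" "c = 3 * a + 8 * b"
    using decomp[OF assms] by blast
  have g: "good c (TU a \<union> DU b)" using good_all[OF ab(1-3)] ab(4) by simp
  have "0 < c" "c < 256" using assms by auto
  then show ?thesis using good_perfect[OF g] by blast
qed


end
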